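(* Let $F\subset\mathbb{C}$ be a perfect closed set, let $(\lambda_i)_{i\in\mathbb{N}}$ be a sequence dense in $F$, and let $(\gamma_i)_{i\in\mathbb{N}}$ be a sequence of strictly positive real numbers with $\sum_{i}\gamma_i<\infty$. Then there exists a sequence of complex numbers $(c_i)_{i\in\mathbb{N}}$ such that (1) $c_i\neq 0$ for all $i$; (2) $|c_i|\le\gamma_i$ for all $i$; (3) the series $\sum_{i=1}^\infty\frac{c_i}{z-\lambda_i}$ converges uniformly on every compact subset of $\mathbb{C}\setminus F$; (4) for all $z\in\mathbb{C}\setminus F$, $\sum_{i=1}^\infty\frac{c_i}{z-\lambda_i}-1\neq 0$.
   Context: A set is perfect if it has no isolated points. *)

theory Defs
  imports "HOL-Analysis.Analysis"
begin

definition perfect_set :: "'a::topological_space set \<Rightarrow> bool" where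
  "perfect_set S \<longleftrightarrow> (\<forall>x\<in>S. x islimpt S)"

end

theory Submission
  imports Defs
begin

lemma perfect_avoid:
  fixes F :: "complex set" and lam :: "nat \<Rightarrow> complex"
  assumes "closed F" "perfect_set F" "x \<in> F" "e > 0"
  shows "\<exists>a\<in>F. a \<notin> range lam \<and> dist a x < e"
proof -
  define G where "G = (\<lambda>i. F - {lam i}) ` UNIV"
  have cG: "countable G" unfolding G_def by simp
  have opG: "openin (top_of_set F) T \<and> F \<subseteq> closure T" if "T \<in> G" for T
  proof -
    obtain i where T: "T = F - {lam i}" using \<open>T \<in> G\<close> unfolding G_def by blast
    have "openin (top_of_set F) T"
      unfolding T by (rule openin_delete) (rule openin_subtopology_self)
    moreover have "F \<subseteq> closure T"
    proof
      fix y assume y: "y \<in> F"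
      show "y \<in> closure T"
      proof (cases "y = lam i")
        case True
        from assms(2) y have "y islimpt F" unfolding perfect_set_def by blast
        then have "y \<in> closure (F - {y})" by (simp add: islimpt_in_closure)
        then show ?thesis unfolding T using True by simp
      next
        case False
        then have "y \<in> T" using y T by blast
        then show ?thesis by (rule closure_subset[THEN subsetD])
      qed
    qed
    ultimately show ?thesis by (rule conjI)
  qed
  have FG: "F \<subseteq> closure (\<Inter>G)" by (rule Baire[OF assms(1) cG opG])
  have IG: "\<Inter>G = F - range lam" unfolding G_def by auto
  have "x \<in> closure (\<Inter>G)" using FG assms(3) by (rule subsetD)
  then have "x \<in> closure (F - range lam)" by (simp only: IG)
  then have "\<forall>e>0. \<exists>y\<in>F - range lam. dist y x < e" by (simp only: closure_approachable)
  with assms(4) obtain a where "a \<in> F - range lam" "dist a x < e" by blast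
  then show ?thesis by blast
qed


locale P2 =
  fixes F :: "complex set" and lam :: "nat \<Rightarrow> complex" and \<gamma> :: "nat \<Rightarrow> real"
  assumes closedF: "closed F" and perf: "perfect_set F" and rng: "range lam \<subseteq> F"
    and gpos: "\<And>i. \<gamma> i > 0" and gsum: "summable \<gamma>"
begin

definition fo :: "nat \<Rightarrow> nat" where "fo i = (LEAST j. lam j = lam i)"
definition S :: "nat set" where "S = {i. fo i = i}"

lemma fo_le: "fo i \<le> i"
  unfolding fo_def by (rule Least_le) simp

lemma fo_lam: "lam (fo i) = lam i"
  unfolding fo_def by (rule LeastI[of _ i]) simp

lemma fo_fo: "fo (fo i) = fo i"
  unfolding fo_def by (simp add: fo_lam[unfolded fo_def])

lemma fo_S: "fo i \<in> S"
  using fo_fo by (simp add: S_def)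

lemma S_neq: "i \<in> S \<Longrightarrow> j < i \<Longrightarrow> lam j \<noteq> lam i"
proof
  assume "i \<in> S" "j < i" "lam j = lam i"
  then have "fo i \<le> j" unfolding fo_def by (intro Least_le) simp
  with \<open>i \<in> S\<close> \<open>j < i\<close> show False by (simp add: S_def)
qed

lemma lamF: "lam i \<in> F" using rng by auto

definition Bd :: "nat \<Rightarrow> (nat \<Rightarrow> complex) \<Rightarrow> real" where
  "Bd n d = (\<Prod>j<n. 1 + norm (d j) / norm (lam n - lam j))"
definition mn :: "nat \<Rightarrow> real" where
  "mn n = Min (insert 1 ((\<lambda>j. norm (lam n - lam j)) ` {..<n}))"
definition rad :: "nat \<Rightarrow> (nat \<Rightarrow> complex) \<Rightarrow> real" where
  "rad n d = min ((1/2)^(n+2) * mn n) (\<gamma> n / (3 * Bd n d))"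
definition chs :: "nat \<Rightarrow> (nat \<Rightarrow> complex) \<Rightarrow> complex" where
  "chs n d = (if n \<in> S then (SOME e. lam n - e \<in> F \<and> lam n - e \<notin> range lam \<and> norm e < rad n d) else 0)"

primrec D :: "nat \<Rightarrow> nat \<Rightarrow> complex" where
  "D 0 = (\<lambda>_. 0)"
| "D (Suc n) = (D n)(n := chs n (D n))"

definition \<delta> :: "nat \<Rightarrow> complex" where "\<delta> n = D (Suc n) n"

lemma D_eq: "i < m \<Longrightarrow> D m i = \<delta> i"
proof (induction m)
  case 0 then show ?case by simp
next
  case (Suc m)
  then show ?case by (cases "i = m") (auto simp: \<delta>_def)
qed

lemma Bd_ge1: "Bd n d \<ge> 1"
  unfolding Bd_def by (rule prod_ge_1) auto

lemma Bd_cong: "(\<And>j. j < n \<Longrightarrow> d j = d' j) \<Longrightarrow> Bd n d = Bd n d'"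
  unfolding Bd_def by (rule prod.cong) auto

lemma chs_cong: "(\<And>j. j < n \<Longrightarrow> d j = d' j) \<Longrightarrow> chs n d = chs n d'"
proof -
  assume "\<And>j. j < n \<Longrightarrow> d j = d' j"
  then have "Bd n d = Bd n d'" by (rule Bd_cong)
  then show ?thesis by (simp add: chs_def rad_def)
qed

lemma \<delta>_chs: "\<delta> n = chs n \<delta>"
proof -
  have "\<delta> n = chs n (D n)" by (simp add: \<delta>_def)
  also have "chs n (D n) = chs n \<delta>" by (rule chs_cong) (simp add: D_eq)
  finally show ?thesis .
qed

lemma mn_pos: "n \<in> S \<Longrightarrow> mn n > 0"
proof -
  assume nS: "n \<in> S"
  have "norm (lam n - lam j) > 0" if "j < n" for j using S_neq[OF nS that] by simp
  then have "\<forall>x\<in>insert 1 ((\<lambda>j. norm (lam n - lam j)) ` {..<n}). x > 0"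
    by auto
  then show ?thesis unfolding mn_def by (subst Min_gr_iff) auto
qed

lemma mn_le: "j < n \<Longrightarrow> mn n \<le> norm (lam n - lam j)"
  unfolding mn_def by (rule Min_le) auto

lemma rad_pos: "n \<in> S \<Longrightarrow> rad n d > 0"
  unfolding rad_def using mn_pos[of n] Bd_ge1[of n d] gpos[of n] by simp

lemma \<delta>_S:
  assumes "n \<in> S"
  shows "lam n - \<delta> n \<in> F \<and> lam n - \<delta> n \<notin> range lam \<and> norm (\<delta> n) < rad n \<delta>"
proof -
  obtain a where a: "a \<in> F" "a \<notin> range lam" "dist a (lam n) < rad n \<delta>"
    using perfect_avoid[OF closedF perf lamF rad_pos[OF assms]] by blast
  have ex: "\<exists>e. lam n - e \<in> F \<and> lam n - e \<notin> range lam \<and> norm e < rad n \<delta>"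
    by (rule exI[of _ "lam n - a"]) (use a in \<open>auto simp: dist_norm norm_minus_commute\<close>)
  show ?thesis
    unfolding \<delta>_chs[of n] using assms chs_def someI_ex[OF ex] by simp
qed

lemma \<delta>_notS: "n \<notin> S \<Longrightarrow> \<delta> n = 0"
  using \<delta>_chs[of n] by (simp add: chs_def)

lemma aF: "lam n - \<delta> n \<in> F"
  using \<delta>_S[of n] \<delta>_notS[of n] lamF by (cases "n \<in> S") auto

lemma a_not: "\<delta> n \<noteq> 0 \<Longrightarrow> lam n - \<delta> n \<noteq> lam k"
  using \<delta>_S[of n] \<delta>_notS[of n] by (cases "n \<in> S") auto

lemma \<delta>_nz: "n \<in> S \<Longrightarrow> \<delta> n \<noteq> 0"
  using \<delta>_S[of n] by auto

lemma \<delta>_small: "i < n \<Longrightarrow> norm (\<delta> n) \<le> (1/2)^(n+2) * norm (lam i - lam n)"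
proof (cases "n \<in> S")
  case True
  assume "i < n"
  have "norm (\<delta> n) \<le> (1/2)^(n+2) * mn n" using \<delta>_S[OF True] unfolding rad_def by simp
  also have "\<dots> \<le> (1/2)^(n+2) * norm (lam i - lam n)"
    using mn_le[OF \<open>i < n\<close>] by (simp add: norm_minus_commute)
  finally show ?thesis .
qed (simp add: \<delta>_notS)

lemma \<delta>_B: "norm (\<delta> n) * Bd n \<delta> \<le> \<gamma> n / 3"
proof (cases "n \<in> S")
  case True
  have "norm (\<delta> n) < \<gamma> n / (3 * Bd n \<delta>)" using \<delta>_S[OF True] unfolding rad_def by simp
  then show ?thesis using Bd_ge1[of n \<delta>] by (simp add: field_simps)
qed (use gpos[of n] in \<open>simp add: \<delta>_notS\<close>)

lemma \<delta>_le: "norm (\<delta> n) \<le> \<gamma> n / 3"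
proof -
  have "norm (\<delta> n) \<le> norm (\<delta> n) * Bd n \<delta>" using Bd_ge1[of n \<delta>] mult_left_mono[of 1 "Bd n \<delta>" "norm (\<delta> n)"] by simp
  then show ?thesis using \<delta>_B[of n] by simp
qed

lemma \<delta>_summable: "summable (\<lambda>n. norm (\<delta> n))"
  by (rule summable_comparison_test[of _ "\<lambda>n. \<gamma> n / 3"]) (use \<delta>_le gsum in auto)


end

context P2 begin
definition g :: "nat \<Rightarrow> nat \<Rightarrow> complex" where
  "g i j = (if j = i then 1 else 1 + \<delta> j / (lam i - lam j))"
definition Cn :: "nat \<Rightarrow> nat \<Rightarrow> complex" where
  "Cn n i = (if i < n then \<delta> i * (\<Prod>j<n. g i j) else 0)"
definition P :: "nat \<Rightarrow> complex \<Rightarrow> complex" where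
  "P n z = (\<Prod>i<n. 1 + \<delta> i / (z - lam i))"

lemma Cn_Suc_old: "i < n \<Longrightarrow> Cn (Suc n) i = Cn n i * (1 + \<delta> n / (lam i - lam n))"
  by (simp add: Cn_def g_def lessThan_Suc)

lemma Cn_Suc_new: "Cn (Suc n) n = \<delta> n * P n (lam n)"
proof -
  have "(\<Prod>j<n. g n j) = P n (lam n)" unfolding P_def g_def by (rule prod.cong) auto
  moreover have "(\<Prod>j<Suc n. g n j) = (\<Prod>j<n. g n j)" by (simp add: lessThan_Suc g_def)
  ultimately show ?thesis by (simp add: Cn_def)
qed

lemma term_id0:
  fixes C e x w y :: complex
  assumes "x \<noteq> 0" "w \<noteq> 0" "y \<noteq> 0" "y = x + w"
  shows "C / x * (1 + e / y) = C * (1 + e / w) / x + (C * e / (- w)) / y"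
proof -
  have 1: "C / x * (1 + e / y) * (x * w * y) = C * w * y + C * e * w"
    using assms(1-3) by (simp add: field_simps)
  have 2: "(C * (1 + e / w) / x + (C * e / (- w)) / y) * (x * w * y) = C * (w + e) * y - C * e * x"
    using assms(1-3) by (simp add: field_simps)
  have 3: "C * w * y + C * e * w = C * (w + e) * y - C * e * x"
    using assms(4) by (simp add: algebra_simps)
  have D: "x * w * y \<noteq> 0" using assms(1-3) by simp
  have "C / x * (1 + e / y) * (x * w * y) = (C * (1 + e / w) / x + (C * e / (- w)) / y) * (x * w * y)"
    by (simp only: 1 2 3)
  then show ?thesis by (rule mult_right_cancel[OF D, THEN iffD1])
qed

lemma term_id:
  fixes C e z a b :: complex
  assumes "z \<noteq> a" "z \<noteq> b" "C = 0 \<or> a \<noteq> b"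
  shows "C / (z - a) * (1 + e / (z - b)) = C * (1 + e / (a - b)) / (z - a) + (C * e / (b - a)) / (z - b)"
proof (cases "C = 0")
  case False
  then have "a \<noteq> b" using assms by auto
  have "C / (z - a) * (1 + e / (z - b)) = C * (1 + e / (a - b)) / (z - a) + (C * e / (- (a - b))) / (z - b)"
    by (rule term_id0) (use assms \<open>a \<noteq> b\<close> in auto)
  then show ?thesis by (simp only: minus_diff_eq)
qed simp

lemma P_id: "(\<forall>i<n. z \<noteq> lam i) \<Longrightarrow> P n z = 1 + (\<Sum>i<n. Cn n i / (z - lam i))"
proof (induction n arbitrary: z)
  case 0
  then show ?case by (simp add: P_def)
next
  case (Suc n)
  have zi: "\<forall>i<n. z \<noteq> lam i" and zn: "z \<noteq> lam n" using Suc.prems by auto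
  have PS: "P (Suc n) z = P n z * (1 + \<delta> n / (z - lam n))" by (simp add: P_def)
  have IHz: "P n z = 1 + (\<Sum>i<n. Cn n i / (z - lam i))" using Suc.IH zi by blast
  show ?case
  proof (cases "\<delta> n = 0")
    case True
    have eq: "Cn (Suc n) i = Cn n i" for i
    proof (cases "i < n")
      case True
      then show ?thesis using \<open>\<delta> n = 0\<close> by (simp add: Cn_Suc_old)
    next
      case False
      then show ?thesis using \<open>\<delta> n = 0\<close> by (cases "i = n") (simp_all add: Cn_def)
    qed
    have "Cn n n = 0" by (simp add: Cn_def)
    then show ?thesis using PS True IHz by (simp add: eq lessThan_Suc)
  next
    case False
    then have nS: "n \<in> S" using \<delta>_notS by blast
    have ln: "\<forall>i<n. lam n \<noteq> lam i" using S_neq[OF nS] by metis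
    have IHn: "P n (lam n) = 1 + (\<Sum>i<n. Cn n i / (lam n - lam i))" using Suc.IH ln by blast
    have "P (Suc n) z = (1 + (\<Sum>i<n. Cn n i / (z - lam i))) * (1 + \<delta> n / (z - lam n))"
      using PS IHz by simp
    also have "\<dots> = (1 + \<delta> n / (z - lam n)) + (\<Sum>i<n. Cn n i / (z - lam i) * (1 + \<delta> n / (z - lam n)))"
      by (simp add: distrib_right sum_distrib_right)
    also have "(\<Sum>i<n. Cn n i / (z - lam i) * (1 + \<delta> n / (z - lam n)))
        = (\<Sum>i<n. Cn n i * (1 + \<delta> n / (lam i - lam n)) / (z - lam i) + (Cn n i * \<delta> n / (lam n - lam i)) / (z - lam n))"
    proof (rule sum.cong)
      fix i assume "i \<in> {..<n}"
      then have "i < n" by simp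
      then show "Cn n i / (z - lam i) * (1 + \<delta> n / (z - lam n)) = Cn n i * (1 + \<delta> n / (lam i - lam n)) / (z - lam i) + (Cn n i * \<delta> n / (lam n - lam i)) / (z - lam n)"
        using zi zn ln by (intro term_id) auto
    qed simp
    also have "\<dots> = (\<Sum>i<n. Cn (Suc n) i / (z - lam i)) + (\<Sum>i<n. Cn n i * \<delta> n / (lam n - lam i)) / (z - lam n)"
      by (simp add: sum.distrib sum_divide_distrib Cn_Suc_old)
    finally have "P (Suc n) z = 1 + (\<Sum>i<n. Cn (Suc n) i / (z - lam i)) + (\<delta> n + (\<Sum>i<n. Cn n i * \<delta> n / (lam n - lam i))) / (z - lam n)"
      by (simp add: add_divide_distrib algebra_simps)
    moreover have "\<delta> n + (\<Sum>i<n. Cn n i * \<delta> n / (lam n - lam i)) = Cn (Suc n) n"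
      unfolding Cn_Suc_new IHn by (simp add: distrib_left sum_distrib_left algebra_simps)
    ultimately show ?thesis by (simp add: lessThan_Suc algebra_simps)
  qed
qed

lemma hq: "i < j \<Longrightarrow> norm (\<delta> j) / norm (lam i - lam j) \<le> (1/2)^(j+2)"
proof (cases "lam i = lam j")
  case False
  assume "i < j"
  then show ?thesis using \<delta>_small[of i j] False by (simp add: divide_le_eq)
qed simp

lemma g_nz: "g i j \<noteq> 0"
proof
  assume g0: "g i j = 0"
  then have ji: "j \<noteq> i" and d0: "\<delta> j \<noteq> 0" and lij: "lam i \<noteq> lam j"
    by (auto simp: g_def split: if_splits)
  have "1 + \<delta> j / (lam i - lam j) = 0" using g0 ji by (simp add: g_def)
  then have "lam i - lam j + \<delta> j = 0" using lij by (simp add: field_simps)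
  then have "lam j - \<delta> j = lam i" by (simp add: algebra_simps)
  with a_not[OF d0] show False by blast
qed

lemma geo_sum: "(\<Sum>j<n. (1/2::real)^(j+2)) = 1/2 - (1/2)^(n+1)"
  by (induction n) (simp_all add: field_simps)

lemma geo_summable: "summable (\<lambda>j. (1/2::real)^(j+2))"
  using summable_mult2[OF summable_geometric[of "1/2::real"], of "1/4"] by (simp add: power_add)

lemma g_conv: "convergent_prod (g i)"
proof -
  have "summable (\<lambda>j. norm (g i j - 1))"
  proof (rule summable_comparison_test'[OF geo_summable, of "Suc i"])
    fix j assume "Suc i \<le> j"
    then have "i < j" by simp
    then have "g i j - 1 = \<delta> j / (lam i - lam j)" by (simp add: g_def)
    then show "norm (norm (g i j - 1)) \<le> (1/2)^(j+2)" using hq[OF \<open>i < j\<close>] by (simp add: norm_divide)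
  qed
  then have "convergent_prod (\<lambda>j. 1 + (g i j - 1))"
    by (rule summable_imp_convergent_prod_complex) (use g_nz in \<open>auto simp: add_eq_0_iff\<close>)
  then show ?thesis by simp
qed

definition C :: "nat \<Rightarrow> complex" where "C i = \<delta> i * prodinf (g i)"

lemma Cn_lim: "(\<lambda>n. Cn n i) \<longlonglongrightarrow> C i"
proof -
  have "(\<lambda>n. \<Prod>j\<le>n. g i j) \<longlonglongrightarrow> prodinf (g i)" by (rule convergent_prod_LIMSEQ[OF g_conv])
  then have "(\<lambda>n. \<Prod>j<n. g i j) \<longlonglongrightarrow> prodinf (g i)" by (simp add: LIMSEQ_lessThan_iff_atMost)
  then have "(\<lambda>n. \<delta> i * (\<Prod>j<n. g i j)) \<longlonglongrightarrow> C i" unfolding C_def by (rule tendsto_mult_left)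
  moreover have "eventually (\<lambda>n. \<delta> i * (\<Prod>j<n. g i j) = Cn n i) sequentially"
    unfolding eventually_sequentially by (rule exI[of _ "Suc i"]) (simp add: Cn_def)
  ultimately show ?thesis by (rule Lim_transform_eventually)
qed

lemma C_notS: "i \<notin> S \<Longrightarrow> C i = 0" by (simp add: C_def \<delta>_notS)
lemma Cn_notS: "i \<notin> S \<Longrightarrow> Cn n i = 0" by (simp add: Cn_def \<delta>_notS)
lemma C_nz: "i \<in> S \<Longrightarrow> C i \<noteq> 0"
  using \<delta>_nz prodinf_nonzero[OF g_conv g_nz] by (simp add: C_def)

lemma Cn_bound: "norm (Cn n i) \<le> 2 * \<gamma> i / 3"
proof (cases "i < n")
  case False
  then show ?thesis using gpos[of i] by (simp add: Cn_def)
next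
  case True
  define h where "h j = (if j = i then 0 else norm (\<delta> j) / norm (lam i - lam j))" for j
  have h0: "h j \<ge> 0" for j by (simp add: h_def)
  have ng: "norm (g i j) \<le> 1 + h j" for j
  proof (cases "j = i")
    case False
    have "norm (g i j) \<le> norm (1::complex) + norm (\<delta> j / (lam i - lam j))"
      unfolding g_def using False norm_triangle_ineq[of 1 "\<delta> j / (lam i - lam j)"] by simp
    then show ?thesis using False by (simp add: h_def norm_divide)
  qed (simp add: g_def h_def)
  have "norm (Cn n i) = norm (\<delta> i) * (\<Prod>j<n. norm (g i j))"
    using True by (simp add: Cn_def norm_mult prod_norm)
  also have "\<dots> \<le> norm (\<delta> i) * (\<Prod>j<n. 1 + h j)"
    by (intro mult_left_mono prod_mono) (auto simp: ng)
  also have "(\<Prod>j<n. 1 + h j) = (\<Prod>j<i. 1 + h j) * (\<Prod>j\<in>{i..<n}. 1 + h j)"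
    using True by (simp add: lessThan_atLeast0 prod.atLeastLessThan_concat)
  also have "(\<Prod>j<i. 1 + h j) = Bd i \<delta>"
    unfolding Bd_def by (rule prod.cong) (auto simp: h_def)
  also have "(\<Prod>j\<in>{i..<n}. 1 + h j) \<le> 2"
  proof -
    have "(\<Prod>j\<in>{i..<n}. 1 + h j) \<le> exp (\<Sum>j\<in>{i..<n}. h j)" by (rule prod_le_exp_sum) (simp add: h0)
    also have "(\<Sum>j\<in>{i..<n}. h j) \<le> (\<Sum>j\<in>{i..<n}. (1/2::real)^(j+2))"
    proof (rule sum_mono)
      fix j assume "j \<in> {i..<n}"
      then show "h j \<le> (1/2)^(j+2)" using hq[of i j] by (cases "j = i") (auto simp: h_def)
    qed
    also have "\<dots> \<le> (\<Sum>j<n. (1/2::real)^(j+2))" by (rule sum_mono2) auto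
    also have "\<dots> \<le> 1/2" unfolding geo_sum by simp
    finally have "(\<Prod>j\<in>{i..<n}. 1 + h j) \<le> exp (1/2)" by (smt (verit) exp_le_cancel_iff)
    then show ?thesis using exp_half_le2 by linarith
  qed
  then have "norm (\<delta> i) * (Bd i \<delta> * (\<Prod>j\<in>{i..<n}. 1 + h j)) \<le> norm (\<delta> i) * (Bd i \<delta> * 2)"
    using Bd_ge1[of i \<delta>] by (intro mult_left_mono) auto
  also have "\<dots> = 2 * (norm (\<delta> i) * Bd i \<delta>)" by simp
  also have "\<dots> \<le> 2 * \<gamma> i / 3" using \<delta>_B[of i] by simp
  finally show ?thesis .
qed

lemma C_bound: "norm (C i) \<le> 2 * \<gamma> i / 3"
  by (rule LIMSEQ_le_const2[OF tendsto_norm[OF Cn_lim]]) (intro exI[of _ 0] allI impI Cn_bound)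

end


lemma prod_lower:
  fixes u :: "nat \<Rightarrow> complex"
  assumes "finite A"
  shows "1 - (\<Sum>i\<in>A. norm (u i)) \<le> norm (\<Prod>i\<in>A. 1 + u i)"
  using assms
proof (induction A rule: finite_induct)
  case empty
  then show ?case by simp
next
  case (insert a A)
  define s where "s = (\<Sum>i\<in>A. norm (u i))"
  define p where "p = norm (\<Prod>i\<in>A. 1 + u i)"
  define t where "t = norm (u a)"
  have s0: "s \<ge> 0" unfolding s_def by (simp add: sum_nonneg)
  have p0: "p \<ge> 0" unfolding p_def by simp
  have t0: "t \<ge> 0" unfolding t_def by simp
  have IH: "1 - s \<le> p" using insert.IH unfolding s_def p_def .
  have n1: "1 - t \<le> norm (1 + u a)"
    using norm_triangle_ineq[of "1 + u a" "- u a"] unfolding t_def by simp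
  have eq: "norm (\<Prod>i\<in>insert a A. 1 + u i) = norm (1 + u a) * p"
    using insert.hyps by (simp add: p_def norm_mult)
  have eq2: "(\<Sum>i\<in>insert a A. norm (u i)) = t + s"
    using insert.hyps by (simp add: s_def t_def)
  show ?case
  proof (cases "1 - t \<le> 0")
    case True
    then show ?thesis unfolding eq eq2 using s0 p0 by (smt (verit) mult_nonneg_nonneg norm_ge_zero)
  next
    case False
    have h1: "(1 - t) * (1 - s) \<le> (1 - t) * p" using False IH by (intro mult_left_mono) auto
    have h2: "(1 - t) * p \<le> norm (1 + u a) * p" using n1 p0 by (rule mult_right_mono)
    have h3: "0 \<le> t * s" using t0 s0 by simp
    have h4: "(1 - t) * (1 - s) = 1 - t - s + t * s" by (simp add: algebra_simps)
    show ?thesis unfolding eq eq2 using h1 h2 h3 h4 by linarith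
  qed
qed

context P2 begin

lemma nonzero_limit:
  assumes zF: "z \<notin> F"
  shows "1 + (\<Sum>i. C i / (z - lam i)) \<noteq> 0"
proof -
  have Fne: "F \<noteq> {}" using lamF by blast
  define d where "d = infdist z F"
  have dpos: "d > 0" unfolding d_def by (rule infdist_pos_not_in_closed[OF closedF Fne zF])
  have dle: "d \<le> norm (z - y)" if "y \<in> F" for y
    unfolding d_def using infdist_le[OF that, of z] by (simp add: dist_norm)
  have zl: "z \<noteq> lam i" for i using zF lamF by blast
  have T: "(\<lambda>n. \<Sum>k. Cn n k / (z - lam k)) \<longlonglongrightarrow> (\<Sum>k. C k / (z - lam k))"
  proof -
    have lk: "(\<lambda>n. Cn n k / (z - lam k)) \<longlonglongrightarrow> C k / (z - lam k)" for k
      by (rule tendsto_divide[OF Cn_lim tendsto_const]) (use zl in auto)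
    have bd: "norm (Cn n k / (z - lam k)) \<le> 2 * \<gamma> k / 3 / d" for n k
    proof -
      have "norm (Cn n k / (z - lam k)) = norm (Cn n k) / norm (z - lam k)" by (simp add: norm_divide)
      also have "\<dots> \<le> (2 * \<gamma> k / 3) / d"
        by (rule frac_le) (use Cn_bound[of n k] gpos[of k] dpos dle[OF lamF[of k]] in auto)
      finally show ?thesis .
    qed
    have sm: "summable (\<lambda>k. 2 * \<gamma> k / 3 / d)"
      by (intro summable_divide summable_mult gsum)
    have "eventually (\<lambda>(k, n). norm (Cn n k / (z - lam k)) \<le> 2 * \<gamma> k / 3 / d) (at_top \<times>\<^sub>F sequentially)"
    proof (rule always_eventually, rule allI)
      fix kn :: "nat \<times> nat"
      obtain k n where kn: "kn = (k, n)" by fastforce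
      show "case kn of (k, n) \<Rightarrow> norm (Cn n k / (z - lam k)) \<le> 2 * \<gamma> k / 3 / d"
        unfolding kn prod.case by (rule bd)
    qed
    from tannerys_theorem[OF lk this sm] show ?thesis by simp
  qed
  have Peq: "P n z = 1 + (\<Sum>k. Cn n k / (z - lam k))" for n
  proof -
    have "(\<Sum>k. Cn n k / (z - lam k)) = (\<Sum>k<n. Cn n k / (z - lam k))"
      by (rule suminf_finite) (auto simp: Cn_def)
    then show ?thesis using P_id[of n z] zl by simp
  qed
  have lim: "(\<lambda>n. P n z) \<longlonglongrightarrow> 1 + (\<Sum>i. C i / (z - lam i))"
    unfolding Peq by (rule tendsto_add[OF tendsto_const T])
  obtain k0 where k0: "\<And>n. n \<ge> k0 \<Longrightarrow> norm (\<Sum>i. norm (\<delta> (i + n))) < d / 2"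
    using suminf_exist_split[OF _ \<delta>_summable, of "d/2"] dpos by auto
  have sh: "summable (\<lambda>i. norm (\<delta> (i + k0)))"
    using \<delta>_summable by (rule summable_ignore_initial_segment)
  have tail: "(\<Sum>i\<in>{k0..<n}. norm (\<delta> i)) \<le> d / 2" if "n \<ge> k0" for n
  proof -
    have "(\<Sum>i\<in>{k0..<n}. norm (\<delta> i)) = (\<Sum>i\<in>{0 + k0..<(n - k0) + k0}. norm (\<delta> i))"
      using that by simp
    also have "\<dots> = (\<Sum>i\<in>{0..<n - k0}. norm (\<delta> (i + k0)))"
      by (rule sum.shift_bounds_nat_ivl)
    also have "\<dots> \<le> (\<Sum>i. norm (\<delta> (i + k0)))"
      by (rule sum_le_suminf[OF sh]) auto
    also have "\<dots> \<le> d / 2" using k0[of k0] by simp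
    finally show ?thesis .
  qed
  have fnz: "1 + \<delta> i / (z - lam i) \<noteq> 0" for i
  proof
    assume "1 + \<delta> i / (z - lam i) = 0"
    then have "z - lam i + \<delta> i = 0" using zl[of i] by (simp add: field_simps)
    then have "z = lam i - \<delta> i" by (simp add: algebra_simps)
    with aF[of i] zF show False by simp
  qed
  have Pk0: "P k0 z \<noteq> 0" unfolding P_def using fnz by (simp add: prod_zero_iff)
  have lowb: "norm (P k0 z) / 2 \<le> norm (P n z)" if "n \<ge> k0" for n
  proof -
    have split: "P n z = P k0 z * (\<Prod>i\<in>{k0..<n}. 1 + \<delta> i / (z - lam i))"
      unfolding P_def using that by (simp add: lessThan_atLeast0 prod.atLeastLessThan_concat)
    have "(\<Sum>i\<in>{k0..<n}. norm (\<delta> i / (z - lam i))) \<le> (\<Sum>i\<in>{k0..<n}. norm (\<delta> i) / d)"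
    proof (rule sum_mono)
      fix i
      show "norm (\<delta> i / (z - lam i)) \<le> norm (\<delta> i) / d"
      proof -
        have h: "d \<le> norm (z - lam i)" by (rule dle[OF lamF])
        have h1: "0 < norm (z - lam i)" using h dpos by linarith
        have h2: "0 < norm (z - lam i) * d" using h1 dpos by (rule mult_pos_pos)
        show ?thesis unfolding norm_divide by (rule divide_left_mono[OF h]) (use h2 in auto)
      qed
    qed
    also have "\<dots> = (\<Sum>i\<in>{k0..<n}. norm (\<delta> i)) / d" by (simp add: sum_divide_distrib)
    also have "\<dots> \<le> (d / 2) / d" using tail[OF that] dpos by (simp add: divide_right_mono)
    also have "\<dots> = 1 / 2" using dpos by simp
    finally have "(\<Sum>i\<in>{k0..<n}. norm (\<delta> i / (z - lam i))) \<le> 1 / 2" .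
    then have "1 / 2 \<le> norm (\<Prod>i\<in>{k0..<n}. 1 + \<delta> i / (z - lam i))"
      using prod_lower[of "{k0..<n}" "\<lambda>i. \<delta> i / (z - lam i)"] by simp
    then have "norm (P k0 z) * (1/2) \<le> norm (P k0 z) * norm (\<Prod>i\<in>{k0..<n}. 1 + \<delta> i / (z - lam i))"
      by (intro mult_left_mono) auto
    then show ?thesis unfolding split by (simp add: norm_mult)
  qed
  have "norm (P k0 z) / 2 \<le> norm (1 + (\<Sum>i. C i / (z - lam i)))"
    by (rule LIMSEQ_le_const[OF tendsto_norm[OF lim]]) (use lowb in blast)
  moreover have "norm (P k0 z) / 2 > 0" using Pk0 by simp
  ultimately show ?thesis by auto
qed

end

context P2 begin

definition \<tau> :: "nat \<Rightarrow> real" where "\<tau> j = min (\<gamma> j) (norm (C (fo j))) * (1/2)^(j+2)"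
definition Rt :: "nat \<Rightarrow> nat \<Rightarrow> real" where "Rt i j = (if j \<notin> S \<and> fo j = i then \<tau> j else 0)"
definition R :: "nat \<Rightarrow> real" where "R i = (\<Sum>j. Rt i j)"
definition c :: "nat \<Rightarrow> complex" where "c i = (if i \<in> S then C i - of_real (R i) else of_real (\<tau> i))"

lemma \<tau>_pos: "\<tau> j > 0"
proof -
  have "C (fo j) \<noteq> 0" using C_nz[OF fo_S] .
  then show ?thesis unfolding \<tau>_def using gpos[of j] by simp
qed

lemma half_pow_le1: "(1/2::real)^k \<le> 1"
  by (simp add: power_le_one)

lemma \<tau>_le_\<gamma>: "\<tau> j \<le> \<gamma> j"
proof -
  have "\<tau> j \<le> \<gamma> j * (1/2)^(j+2)" unfolding \<tau>_def
    by (rule mult_right_mono) auto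
  also have "\<dots> \<le> \<gamma> j * 1" using gpos[of j] half_pow_le1[of "j+2"] by (intro mult_left_mono) auto
  finally show ?thesis by simp
qed

lemma \<tau>_le_C: "\<tau> j \<le> norm (C (fo j)) * (1/2)^(j+2)"
  unfolding \<tau>_def by (rule mult_right_mono) auto

lemma Rt_nonneg: "Rt i j \<ge> 0"
  unfolding Rt_def using \<tau>_pos[of j] by simp

lemma Rt_summable: "summable (Rt i)"
  by (rule summable_comparison_test[OF _ gsum], rule exI[of _ 0])
     (use \<tau>_le_\<gamma> \<tau>_pos gpos in \<open>auto simp: Rt_def less_imp_le\<close>)

lemma R_nonneg: "R i \<ge> 0"
  unfolding R_def by (rule suminf_nonneg[OF Rt_summable Rt_nonneg])

lemma R_le: "R i \<le> norm (C i) / 2"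
proof -
  have gs: "(\<lambda>j. (norm (C i) / 4) * (1/2::real)^j) sums ((norm (C i) / 4) * (1 / (1 - 1/2)))"
    by (rule sums_mult) (rule geometric_sums, simp)
  have fe: "(\<lambda>j. (norm (C i) / 4) * (1/2::real)^j) = (\<lambda>j. norm (C i) * (1/2)^(j+2))"
    by (simp add: power_add)
  have gs': "(\<lambda>j. norm (C i) * (1/2::real)^(j+2)) sums (norm (C i) / 2)"
    using gs unfolding fe by simp
  have "R i \<le> (\<Sum>j. norm (C i) * (1/2::real)^(j+2))"
    unfolding R_def
  proof (rule suminf_le[OF _ Rt_summable sums_summable[OF gs']])
    fix j
    show "Rt i j \<le> norm (C i) * (1/2)^(j+2)"
      using \<tau>_le_C[of j] by (auto simp: Rt_def)
  qed
  also have "\<dots> = norm (C i) / 2" using gs' by (rule sums_unique[symmetric])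
  finally show ?thesis .
qed

lemma c_nz: "c i \<noteq> 0"
proof (cases "i \<in> S")
  case True
  have "norm (C i) - norm (of_real (R i) :: complex) \<le> norm (C i - of_real (R i))"
    by (rule norm_triangle_ineq2)
  then have "norm (C i) - R i \<le> norm (c i)" using True R_nonneg[of i] by (simp add: c_def)
  moreover have "norm (C i) > 0" using C_nz[OF True] by simp
  ultimately have "norm (c i) > 0" using R_le[of i] by linarith
  then show ?thesis by auto
next
  case False
  then show ?thesis using \<tau>_pos[of i] by (simp add: c_def)
qed

lemma c_le: "norm (c i) \<le> \<gamma> i"
proof (cases "i \<in> S")
  case True
  have "norm (C i - of_real (R i)) \<le> norm (C i) + norm (of_real (R i) :: complex)"
    by (rule norm_triangle_ineq4)
  then have "norm (c i) \<le> norm (C i) + R i" using True R_nonneg[of i] by (simp add: c_def)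
  then show ?thesis using R_le[of i] C_bound[of i] by linarith
next
  case False
  then show ?thesis using \<tau>_pos[of i] \<tau>_le_\<gamma>[of i] by (simp add: c_def)
qed

lemma summ_gen:
  assumes zF: "z \<notin> F" and a: "\<And>i. norm (a i) \<le> \<gamma> i"
  shows "summable (\<lambda>i. a i / (z - lam i))"
proof -
  have Fne: "F \<noteq> {}" using lamF by blast
  define d where "d = infdist z F"
  have dpos: "d > 0" unfolding d_def by (rule infdist_pos_not_in_closed[OF closedF Fne zF])
  have dle: "d \<le> norm (z - lam i)" for i
    unfolding d_def using infdist_le[OF lamF[of i], of z] by (simp add: dist_norm)
  have bnd: "norm (a i / (z - lam i)) \<le> \<gamma> i / d" for i
  proof -
    have "norm (a i / (z - lam i)) = norm (a i) / norm (z - lam i)" by (simp add: norm_divide)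
    also have "\<dots> \<le> \<gamma> i / d"
      by (rule frac_le) (use a[of i] gpos[of i] dpos dle[of i] in auto)
    finally show ?thesis .
  qed
  have sg: "summable (\<lambda>i. \<gamma> i / d)" by (intro summable_divide gsum)
  show ?thesis
    by (rule summable_comparison_test[OF _ sg], rule exI[of _ 0]) (use bnd in auto)
qed

lemma c_sum:
  assumes zF: "z \<notin> F"
  shows "(\<Sum>i. c i / (z - lam i)) = (\<Sum>i. C i / (z - lam i))"
proof -
  have Fne: "F \<noteq> {}" using lamF by blast
  define d where "d = infdist z F"
  have dpos: "d > 0" unfolding d_def by (rule infdist_pos_not_in_closed[OF closedF Fne zF])
  have dle: "d \<le> norm (z - lam i)" for i
    unfolding d_def using infdist_le[OF lamF[of i], of z] by (simp add: dist_norm)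
  have zl: "z \<noteq> lam i" for i using zF lamF by blast
  have bnd: "norm (a / (z - lam i)) \<le> \<gamma> i / d" if "norm a \<le> \<gamma> i" for a i
  proof -
    have "norm (a / (z - lam i)) = norm a / norm (z - lam i)" by (simp add: norm_divide)
    also have "\<dots> \<le> \<gamma> i / d"
      by (rule frac_le) (use that gpos[of i] dpos dle[of i] in auto)
    finally show ?thesis .
  qed
  have sg: "summable (\<lambda>i. \<gamma> i / d)" by (intro summable_divide gsum)
  have summ: "summable (\<lambda>i. a i / (z - lam i))" if "\<And>i. norm (a i) \<le> \<gamma> i" for a
    by (rule summable_comparison_test[OF _ sg], rule exI[of _ 0]) (use bnd that in auto)
  define A where "A i = C i / (z - lam i)" for i
  define B where "B i = (if i \<in> S then of_real (R i) / (z - lam i) else 0)" for i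
  define E where "E i = (if i \<notin> S then of_real (\<tau> i) / (z - lam i) else 0)" for i
  have CR_le: "norm (C i) \<le> \<gamma> i" for i using C_bound[of i] gpos[of i] by simp
  have R_le_g: "norm (of_real (R i) :: complex) \<le> \<gamma> i" for i
    using R_le[of i] R_nonneg[of i] CR_le[of i] by simp
  have t_le_g: "norm (of_real (\<tau> i) :: complex) \<le> \<gamma> i" for i
    using \<tau>_le_\<gamma>[of i] \<tau>_pos[of i] by simp
  have sA: "summable A" unfolding A_def by (rule summ[OF CR_le])
  have sB: "summable B"
  proof -
    have "summable (\<lambda>i. (if i \<in> S then of_real (R i) else 0) / (z - lam i))"
      by (rule summ) (use R_le_g gpos less_imp_le in auto)
    moreover have "(\<lambda>i. (if i \<in> S then of_real (R i) else 0) / (z - lam i)) = B" by (rule ext) (simp add: B_def)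
    ultimately show ?thesis by simp
  qed
  have sE: "summable E"
  proof -
    have "summable (\<lambda>i. (if i \<notin> S then of_real (\<tau> i) else 0) / (z - lam i))"
      by (rule summ) (use t_le_g gpos less_imp_le in auto)
    moreover have "(\<lambda>i. (if i \<notin> S then of_real (\<tau> i) else 0) / (z - lam i)) = E" by (rule ext) (simp add: E_def)
    ultimately show ?thesis by simp
  qed
  have ceq: "c i / (z - lam i) = A i - B i + E i" for i
    by (cases "i \<in> S") (simp_all add: c_def A_def B_def E_def C_notS diff_divide_distrib)
  have BE: "suminf B = suminf E"
  proof -
    define a where "a i n = (if i \<in> S then of_real (\<Sum>j<n. Rt i j) / (z - lam i) else 0)" for i n
    have la: "(\<lambda>n. a i n) \<longlonglongrightarrow> B i" for i
    proof (cases "i \<in> S")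
      case True
      have "(\<lambda>n. \<Sum>j<n. Rt i j) \<longlonglongrightarrow> R i" unfolding R_def by (rule summable_LIMSEQ[OF Rt_summable])
      then have "(\<lambda>n. of_real (\<Sum>j<n. Rt i j) :: complex) \<longlonglongrightarrow> of_real (R i)" by (rule tendsto_of_real)
      then have "(\<lambda>n. of_real (\<Sum>j<n. Rt i j) / (z - lam i)) \<longlonglongrightarrow> of_real (R i) / (z - lam i)"
        by (rule tendsto_divide[OF _ tendsto_const]) (use zl in auto)
      then show ?thesis using True by (simp add: a_def B_def)
    next
      case False
      then show ?thesis by (simp add: a_def B_def)
    qed
    have ab: "norm (a i n) \<le> \<gamma> i / d" for i n
    proof (cases "i \<in> S")
      case True
      have "(\<Sum>j<n. Rt i j) \<le> R i" unfolding R_def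
        by (rule sum_le_suminf[OF Rt_summable]) (auto simp: Rt_nonneg)
      moreover have "0 \<le> (\<Sum>j<n. Rt i j)" by (simp add: sum_nonneg Rt_nonneg)
      ultimately have "norm (of_real (\<Sum>j<n. Rt i j) :: complex) \<le> \<gamma> i"
        unfolding norm_of_real using R_le_g[of i] R_nonneg[of i] by (simp add: abs_of_nonneg)
      then show ?thesis using True bnd by (simp add: a_def)
    next
      case False
      then show ?thesis using gpos[of i] dpos by (simp add: a_def)
    qed
    have ev: "eventually (\<lambda>(i, n). norm (a i n) \<le> \<gamma> i / d) (at_top \<times>\<^sub>F sequentially)"
    proof (rule always_eventually, rule allI)
      fix kn :: "nat \<times> nat"
      obtain k n where kn: "kn = (k, n)" by fastforce
      show "case kn of (i, n) \<Rightarrow> norm (a i n) \<le> \<gamma> i / d"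
        unfolding kn prod.case by (rule ab)
    qed
    have T: "(\<lambda>n. \<Sum>i. a i n) \<longlonglongrightarrow> suminf B"
      using tannerys_theorem[OF la ev sg] by simp
    have fin: "(\<Sum>i. a i n) = (\<Sum>j<n. E j)" for n
    proof -
      have a0: "a i n = 0" if "i \<notin> {..<n}" for i
      proof -
        have "Rt i j = 0" if "j < n" for j
          using \<open>i \<notin> {..<n}\<close> that fo_le[of j] by (auto simp: Rt_def)
        then show ?thesis by (simp add: a_def)
      qed
      have "(\<Sum>i. a i n) = (\<Sum>i<n. a i n)" by (rule suminf_finite) (use a0 in auto)
      also have "\<dots> = (\<Sum>i<n. \<Sum>j<n. (if i \<in> S \<and> j \<notin> S \<and> fo j = i then of_real (\<tau> j) / (z - lam i) else 0))"
      proof (rule sum.cong[OF refl])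
        fix i assume "i \<in> {..<n}"
        show "a i n = (\<Sum>j<n. (if i \<in> S \<and> j \<notin> S \<and> fo j = i then of_real (\<tau> j) / (z - lam i) else 0))"
        proof (cases "i \<in> S")
          case True
          have "a i n = (\<Sum>j<n. of_real (Rt i j) / (z - lam i))"
            using True by (simp add: a_def of_real_sum sum_divide_distrib)
          also have "\<dots> = (\<Sum>j<n. (if i \<in> S \<and> j \<notin> S \<and> fo j = i then of_real (\<tau> j) / (z - lam i) else 0))"
            by (rule sum.cong[OF refl]) (simp add: Rt_def True)
          finally show ?thesis .
        next
          case False
          then show ?thesis by (simp add: a_def)
        qed
      qed
      also have "\<dots> = (\<Sum>j<n. \<Sum>i<n. (if i \<in> S \<and> j \<notin> S \<and> fo j = i then of_real (\<tau> j) / (z - lam i) else 0))"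
        by (rule sum.swap)
      also have "\<dots> = (\<Sum>j<n. E j)"
      proof (rule sum.cong[OF refl])
        fix j assume j: "j \<in> {..<n}"
        have fj: "fo j \<in> {..<n}" using j fo_le[of j] by auto
        have "(\<Sum>i<n. (if i \<in> S \<and> j \<notin> S \<and> fo j = i then of_real (\<tau> j) / (z - lam i) else 0))
            = (\<Sum>i<n. (if i = fo j then (if j \<notin> S then of_real (\<tau> j) / (z - lam (fo j)) else 0) else 0))"
          by (rule sum.cong[OF refl]) (use fo_S in auto)
        also have "\<dots> = (if j \<notin> S then of_real (\<tau> j) / (z - lam (fo j)) else 0)"
          using fj by (simp add: sum.delta')
        also have "\<dots> = E j" by (simp add: E_def fo_lam)
        finally show "(\<Sum>i<n. (if i \<in> S \<and> j \<notin> S \<and> fo j = i then of_real (\<tau> j) / (z - lam i) else 0)) = E j" .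
      qed
      finally show ?thesis .
    qed
    have "(\<lambda>n. \<Sum>j<n. E j) \<longlonglongrightarrow> suminf E" by (rule summable_LIMSEQ[OF sE])
    moreover have "(\<lambda>n. \<Sum>j<n. E j) \<longlonglongrightarrow> suminf B" using T unfolding fin .
    ultimately show ?thesis using LIMSEQ_unique by blast
  qed
  have "(\<Sum>i. c i / (z - lam i)) = (\<Sum>i. A i - B i + E i)" by (simp only: ceq)
  also have "\<dots> = suminf A - suminf B + suminf E"
    using sA sB sE by (simp add: suminf_add suminf_diff summable_diff)
  also have "\<dots> = suminf A" using BE by simp
  finally show ?thesis unfolding A_def .
qed

end

theorem proposition2:
  fixes F :: "complex set" and lam :: "nat \<Rightarrow> complex" and \<gamma> :: "nat \<Rightarrow> real"
  assumes "closed F" and "perfect_set F"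
    and "range lam \<subseteq> F" and "F \<subseteq> closure (range lam)"
    and "\<And>i. \<gamma> i > 0" and "summable \<gamma>"
  shows "\<exists>c :: nat \<Rightarrow> complex.
           (\<forall>i. c i \<noteq> 0) \<and>
           (\<forall>i. norm (c i) \<le> \<gamma> i) \<and>
           (\<forall>K. compact K \<and> K \<subseteq> - F \<longrightarrow>
              uniform_limit K (\<lambda>n z. \<Sum>i<n. c i / (z - lam i)) (\<lambda>z. \<Sum>i. c i / (z - lam i)) sequentially) \<and>
           (\<forall>z. z \<notin> F \<longrightarrow> (\<Sum>i. c i / (z - lam i)) - 1 \<noteq> 0)"
proof -
  interpret P2 F lam \<gamma>
    by unfold_locales (use assms in auto)
  define c' where "c' i = - c i" for i
  have c'nz: "\<forall>i. c' i \<noteq> 0" using c_nz by (simp add: c'_def)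
  have c'le: "\<forall>i. norm (c' i) \<le> \<gamma> i" using c_le by (simp add: c'_def)
  have unif: "\<forall>K. compact K \<and> K \<subseteq> - F \<longrightarrow>
      uniform_limit K (\<lambda>n z. \<Sum>i<n. c' i / (z - lam i)) (\<lambda>z. \<Sum>i. c' i / (z - lam i)) sequentially"
  proof (intro allI impI)
    fix K :: "complex set" assume K: "compact K \<and> K \<subseteq> - F"
    define dK where "dK = (if K = {} then 1 else setdist K F)"
    have Fne: "F \<noteq> {}" using lamF by blast
    have dKpos: "dK > 0"
      using K Fne by (auto simp: dK_def setdist_gt_0_compact_closed[OF _ closedF])
    have dKle: "dK \<le> norm (x - lam i)" if "x \<in> K" for x i
    proof -
      have "K \<noteq> {}" using that by blast
      then have "dK = setdist K F" by (simp add: dK_def)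
      also have "\<dots> \<le> dist x (lam i)" by (rule setdist_le_dist[OF that lamF])
      finally show ?thesis by (simp add: dist_norm)
    qed
    show "uniform_limit K (\<lambda>n z. \<Sum>i<n. c' i / (z - lam i)) (\<lambda>z. \<Sum>i. c' i / (z - lam i)) sequentially"
    proof (rule Weierstrass_m_test)
      show "summable (\<lambda>i. \<gamma> i / dK)" by (intro summable_divide gsum)
      fix i x assume x: "x \<in> K"
      have "norm (c' i / (x - lam i)) = norm (c' i) / norm (x - lam i)" by (simp add: norm_divide)
      also have "\<dots> \<le> \<gamma> i / dK"
        by (rule frac_le) (use c'le gpos[of i] dKpos dKle[OF x, of i] in auto)
      finally show "norm (c' i / (x - lam i)) \<le> \<gamma> i / dK" .
    qed
  qed
  have nz: "\<forall>z. z \<notin> F \<longrightarrow> (\<Sum>i. c' i / (z - lam i)) - 1 \<noteq> 0"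
  proof (intro allI impI)
    fix z assume zF: "z \<notin> F"
    have "(\<Sum>i. c' i / (z - lam i)) = (\<Sum>i. - (c i / (z - lam i)))" by (simp add: c'_def)
    also have "\<dots> = - (\<Sum>i. c i / (z - lam i))" by (rule suminf_minus[OF summ_gen[OF zF c_le]])
    also have "\<dots> = - (\<Sum>i. C i / (z - lam i))" using c_sum[OF zF] by simp
    finally have eq: "(\<Sum>i. c' i / (z - lam i)) - 1 = - (1 + (\<Sum>i. C i / (z - lam i)))" by simp
    show "(\<Sum>i. c' i / (z - lam i)) - 1 \<noteq> 0"
      unfolding eq neg_equal_0_iff_equal by (rule nonzero_limit[OF zF])
  qed
  show ?thesis using c'nz c'le unif nz by blast
qed

end
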